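(* Let $\mathfrak g$ be a $7$-dimensional real Lie algebra and $\pi\colon\mathfrak g\to\mathfrak h$ a Lie algebra epimorphism onto a $6$-dimensional Lie algebra $\mathfrak h$ with $\ker\pi$ contained in the center of $\mathfrak g$. Suppose $\mathfrak h$ admits no symplectic form. Then for a generator $X$ of $\ker\pi$ one has $(X\lrcorner\,\phi)^3=0$ for every closed $\phi\in\Lambda^3\mathfrak g^*$; in particular $\mathfrak g$ admits no calibrated $\mathrm{G}_2$-structure.
   Context: $d$ denotes the Chevalley–Eilenberg differential. A symplectic form on a $6$-dimensional Lie algebra is a closed $2$-form $\omega$ with $\omega^3\neq0$. A $3$-form $\varphi$ on a $7$-dimensional Lie algebra defines a $\mathrm{G}_2$-structure if in some basis $f^1,\dots,f^7$ of $\mathfrak g^*$ it equals $f^{127}+f^{347}+f^{567}+f^{135}-f^{236}-f^{146}-f^{245}$; it is calibrated if $d\varphi=0$. *)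

theory Defs
  imports "HOL-Analysis.Analysis"
begin

definition lie_algebra :: "('a::real_vector \<Rightarrow> 'a \<Rightarrow> 'a) \<Rightarrow> bool" where
  "lie_algebra br \<longleftrightarrow> bilinear br \<and> (\<forall>x. br x x = 0) \<and>
     (\<forall>x y z. br x (br y z) + br y (br z x) + br z (br x y) = 0)"

definition lie_hom ::
  "('a::real_vector \<Rightarrow> 'a \<Rightarrow> 'a) \<Rightarrow> ('b::real_vector \<Rightarrow> 'b \<Rightarrow> 'b) \<Rightarrow> ('a \<Rightarrow> 'b) \<Rightarrow> bool" where
  "lie_hom brg brh p \<longleftrightarrow> linear p \<and> (\<forall>x y. p (brg x y) = brh (p x) (p y))"

definition lie_center :: "('a::real_vector \<Rightarrow> 'a \<Rightarrow> 'a) \<Rightarrow> 'a set" where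
  "lie_center br = {z. \<forall>x. br z x = 0}"

text \<open>Exterior k-forms on a real vector space, represented as alternating
  k-multilinear maps, i.e. functions on lists of vectors of length k (their
  values on lists of other lengths are irrelevant).\<close>
definition alt_form :: "nat \<Rightarrow> ('a::real_vector list \<Rightarrow> real) \<Rightarrow> bool" where
  "alt_form k \<phi> \<longleftrightarrow>
     (\<forall>xs i. length xs = k \<longrightarrow> i < k \<longrightarrow> linear (\<lambda>v. \<phi> (xs[i := v]))) \<and>
     (\<forall>xs i j. length xs = k \<longrightarrow> i < j \<longrightarrow> j < k \<longrightarrow> xs ! i = xs ! j \<longrightarrow> \<phi> xs = 0)"

text \<open>Chevalley--Eilenberg differential (trivial coefficients):
  d phi (x_0,...,x_k) = sum_{i<j} (-1)^(i+j) phi([x_i,x_j], x_0,..,^x_i,..,^x_j,..,x_k).\<close>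
definition ce_d :: "('a::real_vector \<Rightarrow> 'a \<Rightarrow> 'a) \<Rightarrow> ('a list \<Rightarrow> real) \<Rightarrow> 'a list \<Rightarrow> real" where
  "ce_d br \<phi> xs = (\<Sum>j<length xs. \<Sum>i<j.
      (-1) ^ (i + j) * \<phi> (br (xs ! i) (xs ! j) # nths xs (- {i, j})))"

definition closed_form :: "('a::real_vector \<Rightarrow> 'a \<Rightarrow> 'a) \<Rightarrow> nat \<Rightarrow> ('a list \<Rightarrow> real) \<Rightarrow> bool" where
  "closed_form br k \<phi> \<longleftrightarrow> (\<forall>xs. length xs = k + 1 \<longrightarrow> ce_d br \<phi> xs = 0)"

definition contr :: "'a \<Rightarrow> ('a list \<Rightarrow> real) \<Rightarrow> 'a list \<Rightarrow> real" where
  "contr X \<phi> xs = \<phi> (X # xs)"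

definition wedge :: "nat \<Rightarrow> nat \<Rightarrow> ('a list \<Rightarrow> real) \<Rightarrow> ('a list \<Rightarrow> real) \<Rightarrow> 'a list \<Rightarrow> real" where
  "wedge k l \<alpha> \<beta> xs =
     (\<Sum>\<sigma>\<in>{\<sigma>. \<sigma> permutes {..<k + l}}.
        of_int (sign \<sigma>) * \<alpha> (map (\<lambda>i. xs ! \<sigma> i) [0..<k])
                       * \<beta> (map (\<lambda>i. xs ! \<sigma> i) [k..<k + l]))
     / (fact k * fact l)"

definition cube2 :: "('a list \<Rightarrow> real) \<Rightarrow> 'a list \<Rightarrow> real" where
  "cube2 \<omega> = wedge 4 2 (wedge 2 2 \<omega> \<omega>) \<omega>"

definition zero_form :: "nat \<Rightarrow> ('a list \<Rightarrow> real) \<Rightarrow> bool" where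
  "zero_form k \<phi> \<longleftrightarrow> (\<forall>xs. length xs = k \<longrightarrow> \<phi> xs = 0)"

definition symplectic_form :: "('a::real_vector \<Rightarrow> 'a \<Rightarrow> 'a) \<Rightarrow> ('a list \<Rightarrow> real) \<Rightarrow> bool" where
  "symplectic_form br \<omega> \<longleftrightarrow> alt_form 2 \<omega> \<and> closed_form br 2 \<omega> \<and> \<not> zero_form 6 (cube2 \<omega>)"

definition tri :: "(nat \<Rightarrow> 'a \<Rightarrow> real) \<Rightarrow> nat \<Rightarrow> nat \<Rightarrow> nat \<Rightarrow> 'a list \<Rightarrow> real" where
  "tri f a b c xs =
     (\<Sum>\<sigma>\<in>{\<sigma>. \<sigma> permutes {..<3::nat}}.
        of_int (sign \<sigma>) * f a (xs ! \<sigma> 0) * f b (xs ! \<sigma> 1) * f c (xs ! \<sigma> 2))"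

definition dual_basis7 :: "(nat \<Rightarrow> 'a::real_vector \<Rightarrow> real) \<Rightarrow> bool" where
  "dual_basis7 f \<longleftrightarrow> (\<forall>i\<in>{1..7}. linear (f i)) \<and>
     (\<forall>c::nat \<Rightarrow> real. (\<forall>v. (\<Sum>i\<in>{1..7}. c i * f i v) = 0) \<longrightarrow> (\<forall>i\<in>{1..7}. c i = 0))"

definition G2_structure :: "('a::real_vector list \<Rightarrow> real) \<Rightarrow> bool" where
  "G2_structure \<phi> \<longleftrightarrow> (\<exists>f. dual_basis7 f \<and>
     (\<forall>xs. length xs = 3 \<longrightarrow> \<phi> xs =
        tri f 1 2 7 xs + tri f 3 4 7 xs + tri f 5 6 7 xs + tri f 1 3 5 xs
        - tri f 2 3 6 xs - tri f 1 4 6 xs - tri f 2 4 5 xs))"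

definition calibrated_G2 :: "('a::real_vector \<Rightarrow> 'a \<Rightarrow> 'a) \<Rightarrow> ('a list \<Rightarrow> real) \<Rightarrow> bool" where
  "calibrated_G2 br \<phi> \<longleftrightarrow> G2_structure \<phi> \<and> closed_form br 3 \<phi>"

end

theory Submission
  imports Defs
begin


lemma sum_perm_sign_insert:
  fixes g :: "('a \<Rightarrow> 'a) \<Rightarrow> real"
  assumes "finite S" "a \<notin> S"
  shows "(\<Sum>p\<in>{p. p permutes insert a S}. of_int (sign p) * g p) =
    (\<Sum>b\<in>insert a S. (if a = b then 1 else -1) * (\<Sum>q\<in>{p. p permutes S}. of_int (sign q) * g (Transposition.transpose a b \<circ> q)))"
proof -
  have "\<And>b q. q permutes S \<Longrightarrow> of_int (sign (Transposition.transpose a b \<circ> q)) = (if a = b then 1 else -1) * (of_int (sign q)::real)"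
    proof -
    fix b q assume q: "q permutes S"
    have "permutation q" using q assms(1) permutation_permutes by blast
    then show "of_int (sign (Transposition.transpose a b \<circ> q)) = (if a = b then 1 else -1) * (of_int (sign q)::real)"
      by (simp add: sign_compose permutation_swap_id sign_swap_id)
  qed
  then show ?thesis
    unfolding sum_over_permutations_insert[OF assms] sum_distrib_left
    by (intro sum.cong refl) (simp add: mult.assoc)
qed

lemmas numsimps = simp_thms numeral_eq_iff zero_neq_numeral numeral_neq_zero one_eq_numeral_iff numeral_eq_one_iff num.distinct num.inject zero_neq_one one_neq_zero

lemma perm_empty: "{p. p permutes {}} = {id}" by (auto simp: permutes_empty)

lemma test4:
  fixes m :: "nat \<Rightarrow> nat \<Rightarrow> real"
  assumes a: "\<And>i j. m j i = - m i j"
  shows "(\<Sum>p\<in>{p. p permutes {0::nat,1,2,3}}. of_int (sign p) * (m (p 0) (p 1) * m (p 2) (p 3))) = 8 * (m 0 1 * m 2 3 - m 0 2 * m 1 3 + m 0 3 * m 1 2)"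
proof -
  have s: "{0::nat,1,2,3} = insert 0 (insert 1 (insert 2 (insert 3 {})))" by simp
  show ?thesis
  apply (simp only: sum_perm_sign_insert finite_insert finite.emptyI insert_iff empty_iff perm_empty numsimps)
  apply (simp only: sum.insert finite_insert finite.emptyI insert_iff empty_iff sum.empty simp_thms numeral_eq_iff zero_neq_numeral numeral_neq_zero one_eq_numeral_iff numeral_eq_one_iff num.distinct num.inject zero_neq_one one_neq_zero)
  apply (simp only: comp_apply id_apply Transposition.transpose_def if_True if_False simp_thms numeral_eq_iff zero_neq_numeral numeral_neq_zero one_eq_numeral_iff numeral_eq_one_iff num.distinct num.inject zero_neq_one one_neq_zero sign_id)
apply (simp only: a[of 0 1] a[of 0 2] a[of 0 3] a[of 1 2] a[of 1 3] a[of 2 3])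
  apply (simp add: algebra_simps)
  done
qed

definition P4 :: "(nat \<Rightarrow> nat \<Rightarrow> real) \<Rightarrow> nat \<Rightarrow> nat \<Rightarrow> nat \<Rightarrow> nat \<Rightarrow> real" where
  "P4 m a b c d = m a b * m c d - m a c * m b d + m a d * m b c"

lemma test6:
  fixes m :: "nat \<Rightarrow> nat \<Rightarrow> real"
  assumes a: "\<And>i j. m j i = - m i j"
  shows "(\<Sum>p\<in>{p. p permutes {0::nat,1,2,3,4,5}}. of_int (sign p) * (P4 m (p 0) (p 1) (p 2) (p 3) * m (p 4) (p 5))) =
     144 * (m 0 1 * P4 m 2 3 4 5 - m 0 2 * P4 m 1 3 4 5 + m 0 3 * P4 m 1 2 4 5 - m 0 4 * P4 m 1 2 3 5 + m 0 5 * P4 m 1 2 3 4)"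
  apply (simp only: sum_perm_sign_insert finite_insert finite.emptyI insert_iff empty_iff perm_empty numsimps)
  apply (simp only: sum.insert finite_insert finite.emptyI insert_iff empty_iff sum.empty numsimps)
  apply (simp only: comp_apply id_apply Transposition.transpose_def if_True if_False numsimps sign_id P4_def)
  apply (simp only: a[of 0 1] a[of 0 2] a[of 0 3] a[of 0 4] a[of 0 5] a[of 1 2] a[of 1 3] a[of 1 4] a[of 1 5] a[of 2 3] a[of 2 4] a[of 2 5] a[of 3 4] a[of 3 5] a[of 4 5])
  apply (simp add: algebra_simps)
  done

lemma upt4: "[0..<4] = [0::nat,1,2,3]" by (simp add: upt_rec)
lemma upt24: "[2..<4] = [2::nat,3]" by (simp add: upt_rec)
lemma upt02: "[0..<2] = [0::nat,1]" by (simp add: upt_rec)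
lemma upt46: "[4..<6] = [4::nat,5]" by (simp add: upt_rec)
lemma lt4: "{..<2+2::nat} = {0,1,2,3}" by auto
lemma lt6: "{..<4+2::nat} = {0,1,2,3,4,5}" by auto

lemma W4:
  fixes \<psi> :: "'a list \<Rightarrow> real"
  assumes as: "\<And>u v. \<psi> [u,v] = - \<psi> [v,u]"
  shows "wedge 2 2 \<psi> \<psi> [a,b,c,d] = 2 * (\<psi>[a,b] * \<psi>[c,d] - \<psi>[a,c] * \<psi>[b,d] + \<psi>[a,d] * \<psi>[b,c])"
proof -
  define m where "m i j = \<psi> [[a,b,c,d]!i, [a,b,c,d]!j]" for i j
  have am: "\<And>i j. m j i = - m i j" unfolding m_def using as by metis
  have "wedge 2 2 \<psi> \<psi> [a,b,c,d] = (\<Sum>p\<in>{p. p permutes {0::nat,1,2,3}}. of_int (sign p) * (m (p 0) (p 1) * m (p 2) (p 3))) / 4"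
    unfolding wedge_def lt4 upt02 upt24 by (simp add: m_def mult.assoc)
  also have "\<dots> = 2 * (m 0 1 * m 2 3 - m 0 2 * m 1 3 + m 0 3 * m 1 2)"
    using test4[of m, OF am] by simp
  finally show ?thesis by (simp add: m_def)
qed

lemma W6:
  fixes \<psi> :: "'a list \<Rightarrow> real"
  assumes as: "\<And>u v. \<psi> [u,v] = - \<psi> [v,u]" and len: "length xs = 6"
  shows "cube2 \<psi> xs = 6 * (let m = (\<lambda>i j. \<psi> [xs!i, xs!j]) in
     (m 0 1 * P4 m 2 3 4 5 - m 0 2 * P4 m 1 3 4 5 + m 0 3 * P4 m 1 2 4 5 - m 0 4 * P4 m 1 2 3 5 + m 0 5 * P4 m 1 2 3 4))"
proof -
  define m where "m i j = \<psi> [xs!i, xs!j]" for i j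
  have am: "\<And>i j. m j i = - m i j" unfolding m_def using as by metis
  let ?S = "{p. p permutes {0::nat,1,2,3,4,5}}"
  have "cube2 \<psi> xs = (\<Sum>p\<in>?S. of_int (sign p) * (2 * (P4 m (p 0) (p 1) (p 2) (p 3) * m (p 4) (p 5)))) / (fact 4 * fact 2)"
    unfolding cube2_def wedge_def[of 4 2] lt6 upt4 upt46
    apply (rule arg_cong[where f="\<lambda>t. t / (fact 4 * fact 2)"])
    apply (rule sum.cong[OF refl])
    by (simp add: W4[of \<psi>, OF as] m_def P4_def algebra_simps)
  also have "\<dots> = (\<Sum>p\<in>?S. of_int (sign p) * (P4 m (p 0) (p 1) (p 2) (p 3) * m (p 4) (p 5))) / 24"
    by (simp add: fact_numeral sum_distrib_left[symmetric] mult.left_commute[of _ 2])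
  also have "\<dots> = 6 * (m 0 1 * P4 m 2 3 4 5 - m 0 2 * P4 m 1 3 4 5 + m 0 3 * P4 m 1 2 4 5 - m 0 4 * P4 m 1 2 3 5 + m 0 5 * P4 m 1 2 3 4)"
    unfolding test6[of m, OF am] by simp
  finally show ?thesis unfolding Let_def m_def[abs_def] .
qed


lemma alt_lin: "alt_form k \<phi> \<Longrightarrow> length xs = k \<Longrightarrow> i < k \<Longrightarrow> linear (\<lambda>v. \<phi> (xs[i := v]))"
  by (simp add: alt_form_def)

lemma alt_eq0: "alt_form k \<phi> \<Longrightarrow> length xs = k \<Longrightarrow> i < j \<Longrightarrow> j < k \<Longrightarrow> xs!i = xs!j \<Longrightarrow> \<phi> xs = 0"
  unfolding alt_form_def by blast

context fixes \<phi> :: "'a::real_vector list \<Rightarrow> real" assumes alt: "alt_form 3 \<phi>"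
begin
lemma L0: "linear (\<lambda>v. \<phi> [v,y,z])"
  using alt_lin[OF alt, of "[0,y,z]" 0] by simp
lemma L1: "linear (\<lambda>v. \<phi> [x,v,z])"
  using alt_lin[OF alt, of "[x,0,z]" 1] by simp
lemma L2: "linear (\<lambda>v. \<phi> [x,y,v])"
  using alt_lin[OF alt, of "[x,y,0]" 2] by simp
lemma Z01: "\<phi> [x,x,z] = 0" using alt_eq0[OF alt, of "[x,x,z]" 0 1] by simp
lemma Z02: "\<phi> [x,y,x] = 0" using alt_eq0[OF alt, of "[x,y,x]" 0 2] by simp
lemma Z12: "\<phi> [x,y,y] = 0" using alt_eq0[OF alt, of "[x,y,y]" 1 2] by simp
lemma S01: "\<phi> [u,v,w] = - \<phi> [v,u,w]"
proof -
  have "0 = \<phi> [u+v,u+v,w]" by (simp add: Z01)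
  also have "\<dots> = \<phi> [u,u+v,w] + \<phi> [v,u+v,w]" using linear_add[OF L0] by simp
  also have "\<dots> = \<phi> [u,v,w] + \<phi> [v,u,w]"
    using linear_add[OF L1[where x=u and z=w]] linear_add[OF L1[where x=v and z=w]] by (simp add: Z01)
  finally show ?thesis by simp
qed
lemma S12: "\<phi> [x,u,v] = - \<phi> [x,v,u]"
proof -
  have "0 = \<phi> [x,u+v,u+v]" by (simp add: Z12)
  also have "\<dots> = \<phi> [x,u,u+v] + \<phi> [x,v,u+v]" using linear_add[OF L1] by simp
  also have "\<dots> = \<phi> [x,u,v] + \<phi> [x,v,u]"
    using linear_add[OF L2[where x=x and y=u]] linear_add[OF L2[where x=x and y=v]] by (simp add: Z12)
  finally show ?thesis by simp
qed
lemma Zhd: "\<phi> [0,y,z] = 0" using linear_0[OF L0] by simp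
end

lemma ce_d3: "ce_d br \<psi> [a,b,c] = - \<psi> [br a b, c] + \<psi> [br a c, b] - \<psi> [br b c, a]"
  by (simp add: ce_d_def numeral_eq_Suc nths_Cons)

lemma ce_d4: "ce_d br \<psi> [x,a,b,c] = - \<psi> [br x a, b, c] + \<psi> [br x b, a, c] - \<psi> [br a b, x, c]
   - \<psi> [br x c, a, b] + \<psi> [br a c, x, b] - \<psi> [br b c, x, a]"
  by (simp add: ce_d_def numeral_eq_Suc nths_Cons)

lemma wedge_pull:
  assumes "\<forall>zs. length zs = k \<longrightarrow> \<alpha> zs = \<alpha>' (map p zs)" "\<forall>zs. length zs = l \<longrightarrow> \<beta> zs = \<beta>' (map p zs)"
    and "length xs = k + l"
  shows "wedge k l \<alpha> \<beta> xs = wedge k l \<alpha>' \<beta>' (map p xs)"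
  unfolding wedge_def
proof (rule arg_cong[where f="\<lambda>t. t / _"], rule sum.cong[OF refl])
  fix \<sigma> assume "\<sigma> \<in> {\<sigma>. \<sigma> permutes {..<k + l}}"
  then have s: "\<And>i. i < k + l \<Longrightarrow> \<sigma> i < k + l" using permutes_in_image by fastforce
  have 1: "map (\<lambda>i. map p xs ! \<sigma> i) [0..<k] = map p (map (\<lambda>i. xs ! \<sigma> i) [0..<k])"
    using s assms(3) by auto
  have 2: "map (\<lambda>i. map p xs ! \<sigma> i) [k..<k+l] = map p (map (\<lambda>i. xs ! \<sigma> i) [k..<k+l])"
    using s assms(3) by auto
  show "of_int (sign \<sigma>) * \<alpha> (map (\<lambda>i. xs ! \<sigma> i) [0..<k]) * \<beta> (map (\<lambda>i. xs ! \<sigma> i) [k..<k + l]) =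
        of_int (sign \<sigma>) * \<alpha>' (map (\<lambda>i. map p xs ! \<sigma> i) [0..<k]) * \<beta>' (map (\<lambda>i. map p xs ! \<sigma> i) [k..<k + l])"
    unfolding 1 2 using assms(1,2) by simp
qed

lemma cube2_pull:
  assumes "\<forall>zs. length zs = 2 \<longrightarrow> \<alpha> zs = \<alpha>' (map p zs)" and "length xs = 6"
  shows "cube2 \<alpha> xs = cube2 \<alpha>' (map p xs)"
proof -
  have "\<forall>zs. length zs = 4 \<longrightarrow> wedge 2 2 \<alpha> \<alpha> zs = wedge 2 2 \<alpha>' \<alpha>' (map p zs)"
    using wedge_pull[OF assms(1) assms(1)] by simp
  then show ?thesis unfolding cube2_def using wedge_pull[OF _ assms(1)] assms(2) by simp
qed


lemma part1:
  fixes brg :: "'g::real_vector \<Rightarrow> 'g \<Rightarrow> 'g" and brh :: "'h::real_vector \<Rightarrow> 'h \<Rightarrow> 'h"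
  assumes lin: "linear p" and surj: "surj p"
   and hom: "\<forall>x y. p (brg x y) = brh (p x) (p y)"
   and cen: "\<forall>y. brg X y = 0"
   and ker: "span {X} = {x. p x = 0}"
   and nos: "\<not> (\<exists>\<omega>. symplectic_form brh \<omega>)"
   and alt: "alt_form 3 \<phi>" and cl: "closed_form brg 3 \<phi>"
  shows "zero_form 6 (cube2 (contr X \<phi>))"
proof -
  obtain s where sl: "linear s" and ps0: "p \<circ> s = id"
    using linear_surjective_right_inverse[OF lin surj] by blast
  have ps: "\<And>y. p (s y) = y" using ps0 by (metis comp_apply id_apply)
  have key: "\<exists>c. s (p u) = u + c *\<^sub>R X" for u
  proof -
    have "p (s (p u) - u) = 0" using linear_diff[OF lin] ps by simp
    then have "s (p u) - u \<in> span {X}" using ker by simp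
    then obtain c where "s (p u) - u = c *\<^sub>R X" using span_singleton by auto
    then show ?thesis by (metis add.commute diff_add_cancel)
  qed
  have E1: "\<phi> [X, s (p u), s (p v)] = \<phi> [X, u, v]" for u v
  proof -
    obtain a where a: "s (p u) = u + a *\<^sub>R X" using key by blast
    obtain b where b: "s (p v) = v + b *\<^sub>R X" using key by blast
    have "\<phi> [X, u + a *\<^sub>R X, v + b *\<^sub>R X] = \<phi> [X, u, v + b *\<^sub>R X]"
      using linear_add[OF L1[OF alt, where x=X and z="v + b *\<^sub>R X"]]
            linear_scale[OF L1[OF alt, where x=X and z="v + b *\<^sub>R X"]] Z01[OF alt] by simp
    also have "\<dots> = \<phi> [X, u, v]"
      using linear_add[OF L2[OF alt, where x=X and y=u]]
            linear_scale[OF L2[OF alt, where x=X and y=u]] Z02[OF alt] by simp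
    finally show ?thesis using a b by simp
  qed
  define \<omega> where "\<omega> ys = \<phi> (X # map s ys)" for ys
  have altw: "alt_form 2 \<omega>"
    unfolding alt_form_def
  proof (intro conjI allI impI)
    fix xs :: "'h list" and i :: nat assume len: "length xs = 2" and i: "i < 2"
    have eq: "(\<lambda>v. \<omega> (xs[i := v])) = (\<lambda>w. \<phi> ((X # map s xs)[Suc i := w])) \<circ> s"
      by (rule ext) (simp add: \<omega>_def map_update)
    show "linear (\<lambda>v. \<omega> (xs[i := v]))" unfolding eq
      by (rule linear_compose[OF sl alt_lin[OF alt]]) (use len i in auto)
  next
    fix xs :: "'h list" and i j :: nat assume len: "length xs = 2" and ij: "i < j" "j < 2" and e: "xs ! i = xs ! j"
    then have "i = 0" "j = 1" by auto
    then show "\<omega> xs = 0" unfolding \<omega>_def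
      using alt_eq0[OF alt, of "X # map s xs" 1 2] len e by simp
  qed
  have clw: "closed_form brh 2 \<omega>"
    unfolding closed_form_def
  proof (intro allI impI)
    fix ys :: "'h list" assume "length ys = 2 + 1"
    then obtain y0 y1 y2 where ys: "ys = [y0, y1, y2]"
      by (auto simp: numeral_eq_Suc length_Suc_conv)
    define a where "a = s y0"
    define b where "b = s y1"
    define c where "c = s y2"
    have yy: "y0 = p a" "y1 = p b" "y2 = p c" using ps a_def b_def c_def by auto
    have om: "\<omega> [brh (p u) (p v), p w] = \<phi> [X, brg u v, w]" for u v w
      unfolding \<omega>_def using E1 by (simp add: hom[rule_format, symmetric])
    have "ce_d brg \<phi> [X, a, b, c] = 0" using cl unfolding closed_form_def by simp
    then have "\<phi> [X, brg a b, c] - \<phi> [X, brg a c, b] + \<phi> [X, brg b c, a] = 0"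
      unfolding ce_d4 using cen Zhd[OF alt] S01[OF alt, of "brg a b" X c] S01[OF alt, of "brg a c" X b] S01[OF alt, of "brg b c" X a] by simp
    then show "ce_d brh \<omega> ys = 0" unfolding ys yy ce_d3 om by simp
  qed
  have zw: "zero_form 6 (cube2 \<omega>)"
    using nos altw clw unfolding symplectic_form_def by blast
  have pull: "\<forall>zs. length zs = 2 \<longrightarrow> contr X \<phi> zs = \<omega> (map p zs)"
  proof (intro allI impI)
    fix zs :: "'g list" assume "length zs = 2"
    then obtain u v where "zs = [u, v]" by (auto simp: numeral_eq_Suc length_Suc_conv)
    then show "contr X \<phi> zs = \<omega> (map p zs)" by (simp add: contr_def \<omega>_def E1)
  qed
  show ?thesis unfolding zero_form_def
    using cube2_pull[OF pull] zw unfolding zero_form_def by simp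
qed


lemma ker_line:
  fixes p :: "'g::euclidean_space \<Rightarrow> 'h::euclidean_space"
  assumes lin: "linear p" and surj: "surj p" and dg: "DIM('g) = 7" and dh: "DIM('h) = 6"
  shows "\<exists>X. X \<noteq> 0 \<and> span {X} = {x. p x = 0}"
proof -
  have "\<exists>X0. X0 \<noteq> 0 \<and> p X0 = 0"
  proof (rule ccontr)
    assume "\<not> ?thesis"
    then have inj: "inj p" using linear_injective_0[OF lin] by blast
    have "independent (p ` Basis)"
      using linear_independent_injective_image[OF lin independent_Basis] inj by (meson inj_on_subset subset_UNIV)
    then have "card (p ` Basis) \<le> DIM('h)" using independent_bound by blast
    moreover have "card (p ` Basis) = DIM('g)" using inj by (simp add: card_image inj_on_subset)
    ultimately show False using dg dh by simp
  qed
  then obtain X0 where X0: "X0 \<noteq> 0" "p X0 = 0" by blast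
  have sub: "span {X0} \<subseteq> {x. p x = 0}"
    using X0 linear_scale[OF lin] by (auto simp: span_singleton)
  have "{x. p x = 0} \<subseteq> span {X0}"
  proof
    fix Y assume Y: "Y \<in> {x. p x = 0}"
    show "Y \<in> span {X0}"
    proof (rule ccontr)
      assume nY: "Y \<notin> span {X0}"
      have ind: "independent {Y, X0}"
        using nY X0 by (intro independent_insertI) (auto simp: independent_insert independent_empty)
      obtain B where B0: "{Y, X0} \<subseteq> B" "B \<subseteq> UNIV" "independent B" "UNIV \<subseteq> span B"
        by (rule maximal_independent_subset_extend[OF subset_UNIV ind])
      note B = B0(1,3,4)
      have fB: "finite B" using B(2) independent_bound by auto
      have spB: "span B = UNIV" using B(3) by auto
      then have "dim B = DIM('g)" using dim_eq_full by blast
      then have cB: "card B = 7" using dim_eq_card_independent[OF B(2)] dg by simp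
      have YX: "Y \<noteq> X0" using nY span_base by blast
      have c5: "card (B - {Y, X0}) = 5" using cB B(1) fB YX by (simp add: card_Diff_subset)
      have pB: "p ` B = insert 0 (p ` (B - {Y, X0}))" using B(1) Y X0 by auto
      have "UNIV = p ` span B" using spB surj by simp
      also have "\<dots> = span (p ` B)" using linear_span_image[OF lin, of B] by simp
      also have "\<dots> = span (p ` (B - {Y, X0}))" unfolding pB by simp
      finally have "UNIV \<subseteq> span (p ` (B - {Y, X0}))" by simp
      then have "dim (UNIV::'h set) \<le> card (p ` (B - {Y, X0}))" using fB by (intro dim_le_card) simp_all
      also have "\<dots> \<le> 5" using c5 card_image_le[of "B - {Y, X0}" p] fB by simp
      finally show False using dh by simp
    qed
  qed
  then show ?thesis using sub X0 by blast
qed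



lemma perm3: "{..<3::nat} = {0,1,2}" by auto

lemma sum_perm3:
  fixes g :: "nat \<Rightarrow> nat \<Rightarrow> nat \<Rightarrow> real"
  shows "(\<Sum>p\<in>{p. p permutes {0::nat,1,2}}. of_int (sign p) * g (p 0) (p 1) (p 2)) =
    g 0 1 2 - g 0 2 1 - g 1 0 2 + g 1 2 0 + g 2 0 1 - g 2 1 0"
  apply (simp only: sum_perm_sign_insert finite_insert finite.emptyI insert_iff empty_iff perm_empty numsimps)
  apply (simp only: sum.insert finite_insert finite.emptyI insert_iff empty_iff sum.empty numsimps)
  apply (simp only: comp_apply id_apply Transposition.transpose_def if_True if_False numsimps sign_id)
  apply (simp add: algebra_simps)
  done

definition T3 :: "(nat \<Rightarrow> 'a \<Rightarrow> real) \<Rightarrow> nat \<Rightarrow> nat \<Rightarrow> nat \<Rightarrow> 'a \<Rightarrow> 'a \<Rightarrow> 'a \<Rightarrow> real" where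
  "T3 f a b c x y z = f a x * f b y * f c z - f a x * f b z * f c y - f a y * f b x * f c z
     + f a y * f b z * f c x + f a z * f b x * f c y - f a z * f b y * f c x"

lemma tri3: "tri f a b c [x,y,z] = T3 f a b c x y z"
proof -
  have "tri f a b c [x,y,z] = (\<Sum>p\<in>{p. p permutes {0::nat,1,2}}. of_int (sign p) *
     (\<lambda>i j k. f a ([x,y,z]!i) * f b ([x,y,z]!j) * f c ([x,y,z]!k)) (p 0) (p 1) (p 2))"
    unfolding tri_def perm3 by (simp add: mult.assoc)
  also have "\<dots> = T3 f a b c x y z"
    using sum_perm3[of "\<lambda>i j k. f a ([x,y,z]!i) * f b ([x,y,z]!j) * f c ([x,y,z]!k)"] unfolding T3_def by simp
  finally show ?thesis .
qed

definition G2f :: "(nat \<Rightarrow> 'a \<Rightarrow> real) \<Rightarrow> 'a \<Rightarrow> 'a \<Rightarrow> 'a \<Rightarrow> real" where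
  "G2f f x y z = T3 f 1 2 7 x y z + T3 f 3 4 7 x y z + T3 f 5 6 7 x y z + T3 f 1 3 5 x y z
        - T3 f 2 3 6 x y z - T3 f 1 4 6 x y z - T3 f 2 4 5 x y z"

lemma G2_alt:
  fixes \<phi> :: "'a::real_vector list \<Rightarrow> real"
  assumes lf: "\<And>i. i \<in> {1..7} \<Longrightarrow> linear (f i)"
    and eq: "\<forall>xs. length xs = 3 \<longrightarrow> \<phi> xs =
        tri f 1 2 7 xs + tri f 3 4 7 xs + tri f 5 6 7 xs + tri f 1 3 5 xs
        - tri f 2 3 6 xs - tri f 1 4 6 xs - tri f 2 4 5 xs"
  shows "alt_form 3 \<phi>"
proof -
  have phi3: "\<phi> [x,y,z] = G2f f x y z" for x y z
    using eq[rule_format, of "[x,y,z]"] by (simp add: tri3 G2f_def)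
  have fa: "f i (u + v) = f i u + f i v" if "i \<in> {1..7}" for i u v using linear_add[OF lf[OF that]] .
  have fs: "f i (c *\<^sub>R u) = c * f i u" if "i \<in> {1..7}" for i c u using linear_scale[OF lf[OF that]] by simp
  have l0: "linear (\<lambda>v. G2f f v y z)" for y z
    by (rule linearI) (simp_all add: G2f_def T3_def fa fs algebra_simps)
  have l1: "linear (\<lambda>v. G2f f x v z)" for x z
    by (rule linearI) (simp_all add: G2f_def T3_def fa fs algebra_simps)
  have l2: "linear (\<lambda>v. G2f f x y v)" for x y
    by (rule linearI) (simp_all add: G2f_def T3_def fa fs algebra_simps)
  show ?thesis unfolding alt_form_def
  proof (intro conjI allI impI)
    fix xs :: "'a list" and i :: nat assume len: "length xs = 3" and i: "i < 3"
    obtain x y z where xs: "xs = [x,y,z]" using len by (auto simp: numeral_eq_Suc length_Suc_conv)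
    have "i = 0 \<or> i = 1 \<or> i = 2" using i by auto
    then show "linear (\<lambda>v. \<phi> (xs[i := v]))"
      using l0 l1 l2 by (auto simp: xs phi3)
  next
    fix xs :: "'a list" and i j :: nat assume len: "length xs = 3" and ij: "i < j" "j < 3" and e: "xs ! i = xs ! j"
    obtain x y z where xs: "xs = [x,y,z]" using len by (auto simp: numeral_eq_Suc length_Suc_conv)
    have "(i = 0 \<and> j = 1) \<or> (i = 0 \<and> j = 2) \<or> (i = 1 \<and> j = 2)" using ij by auto
    then show "\<phi> xs = 0" using e by (auto simp: xs phi3 G2f_def T3_def algebra_simps)
  qed
qed


lemma G2_nondeg:
  fixes \<phi> :: "'g::euclidean_space list \<Rightarrow> real"
  assumes G2: "G2_structure \<phi>" and dg: "DIM('g) = 7" and X: "X \<noteq> 0"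
  shows "\<not> zero_form 6 (cube2 (contr X \<phi>))"
proof
  assume z: "zero_form 6 (cube2 (contr X \<phi>))"
  obtain f where db: "dual_basis7 f" and eq: "\<forall>xs. length xs = 3 \<longrightarrow> \<phi> xs =
        tri f 1 2 7 xs + tri f 3 4 7 xs + tri f 5 6 7 xs + tri f 1 3 5 xs
        - tri f 2 3 6 xs - tri f 1 4 6 xs - tri f 2 4 5 xs"
    using G2 unfolding G2_structure_def by blast
  have lf: "\<And>i. i \<in> {1..7} \<Longrightarrow> linear (f i)" using db unfolding dual_basis7_def by blast
  have alt: "alt_form 3 \<phi>" by (rule G2_alt[OF lf eq])
  have phi3: "\<phi> [x,y,z] = G2f f x y z" for x y z
    using eq[rule_format, of "[x,y,z]"] by (simp add: tri3 G2f_def)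
  have asym: "\<And>u v. contr X \<phi> [u,v] = - contr X \<phi> [v,u]" unfolding contr_def by (rule S12[OF alt])
  have fa: "f i (u + v) = f i u + f i v" if "i \<in> {1..7}" for i u v using linear_add[OF lf[OF that]] .
  have fs: "f i (c *\<^sub>R u) = c * f i u" if "i \<in> {1..7}" for i c u using linear_scale[OF lf[OF that]] by simp
  define F :: "'g \<Rightarrow> real \<times> real \<times> real \<times> real \<times> real \<times> real \<times> real" where "F v = (f 1 v, f 2 v, f 3 v, f 4 v, f 5 v, f 6 v, f 7 v)" for v
  have linF: "linear F" by (rule linearI) (simp_all add: F_def fa fs)
  have dT: "DIM(real \<times> real \<times> real \<times> real \<times> real \<times> real \<times> real) = 7" by simp
  have surjF: "surj F"
  proof (rule ccontr)
    assume ns: "\<not> surj F"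
    have sp: "span (range F) = range F" using linear_span_image[OF linF, of UNIV] by simp
    have "span (range F) \<noteq> UNIV" using ns unfolding sp by simp
    then have "dim (range F) \<noteq> DIM(real \<times> real \<times> real \<times> real \<times> real \<times> real \<times> real)" using dim_eq_full[of "range F"] by blast
    moreover have "dim (range F) \<le> DIM(real \<times> real \<times> real \<times> real \<times> real \<times> real \<times> real)" by (rule dim_subset_UNIV)
    ultimately have "dim (range F) < DIM(real \<times> real \<times> real \<times> real \<times> real \<times> real \<times> real)" by simp
    then obtain c where c: "c \<noteq> 0" "\<And>y. y \<in> span (range F) \<Longrightarrow> orthogonal c y"
      using orthogonal_to_subspace_exists by blast
    define cf where "cf i = (if i = 1 then fst c else if i = 2 then fst (snd c) else if i = 3 then fst (snd (snd c))
      else if i = 4 then fst (snd (snd (snd c))) else if i = 5 then fst (snd (snd (snd (snd c))))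
      else if i = 6 then fst (snd (snd (snd (snd (snd c))))) else snd (snd (snd (snd (snd (snd c))))))" for i :: nat
    have s7: "{1..7::nat} = {1,2,3,4,5,6,7}" by auto
    have "\<forall>v. (\<Sum>i\<in>{1..7}. cf i * f i v) = 0"
    proof
      fix v
      have "orthogonal c (F v)" using c(2) span_base by blast
      then show "(\<Sum>i\<in>{1..7}. cf i * f i v) = 0"
        unfolding s7 by (cases c) (simp add: orthogonal_def F_def cf_def inner_prod_def)
    qed
    then have "\<forall>i\<in>{1..7}. cf i = 0" using db unfolding dual_basis7_def by blast
    then have "c = 0" unfolding s7 by (cases c) (simp add: cf_def zero_prod_def)
    then show False using c(1) by simp
  qed
  have injF: "inj F" using eucl.linear_surjective_imp_injective[OF linF surjF] dg dT by simp
  then have "F X \<noteq> 0" using linear_injective_0[OF linF] X by blast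
  then have nz: "f 1 X \<noteq> 0 \<or> f 2 X \<noteq> 0 \<or> f 3 X \<noteq> 0 \<or> f 4 X \<noteq> 0 \<or> f 5 X \<noteq> 0 \<or> f 6 X \<noteq> 0 \<or> f 7 X \<noteq> 0"
    by (auto simp: F_def zero_prod_def)
  obtain e1 where e1: "F e1 = (1,0,0,0,0,0,0)" using surjF by (metis surj_def)
  have ev1: "f 1 e1 = 1" "f 2 e1 = 0" "f 3 e1 = 0" "f 4 e1 = 0" "f 5 e1 = 0" "f 6 e1 = 0" "f 7 e1 = 0" using e1 by (simp_all add: F_def)
  obtain e2 where e2: "F e2 = (0,1,0,0,0,0,0)" using surjF by (metis surj_def)
  have ev2: "f 1 e2 = 0" "f 2 e2 = 1" "f 3 e2 = 0" "f 4 e2 = 0" "f 5 e2 = 0" "f 6 e2 = 0" "f 7 e2 = 0" using e2 by (simp_all add: F_def)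
  obtain e3 where e3: "F e3 = (0,0,1,0,0,0,0)" using surjF by (metis surj_def)
  have ev3: "f 1 e3 = 0" "f 2 e3 = 0" "f 3 e3 = 1" "f 4 e3 = 0" "f 5 e3 = 0" "f 6 e3 = 0" "f 7 e3 = 0" using e3 by (simp_all add: F_def)
  obtain e4 where e4: "F e4 = (0,0,0,1,0,0,0)" using surjF by (metis surj_def)
  have ev4: "f 1 e4 = 0" "f 2 e4 = 0" "f 3 e4 = 0" "f 4 e4 = 1" "f 5 e4 = 0" "f 6 e4 = 0" "f 7 e4 = 0" using e4 by (simp_all add: F_def)
  obtain e5 where e5: "F e5 = (0,0,0,0,1,0,0)" using surjF by (metis surj_def)
  have ev5: "f 1 e5 = 0" "f 2 e5 = 0" "f 3 e5 = 0" "f 4 e5 = 0" "f 5 e5 = 1" "f 6 e5 = 0" "f 7 e5 = 0" using e5 by (simp_all add: F_def)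
  obtain e6 where e6: "F e6 = (0,0,0,0,0,1,0)" using surjF by (metis surj_def)
  have ev6: "f 1 e6 = 0" "f 2 e6 = 0" "f 3 e6 = 0" "f 4 e6 = 0" "f 5 e6 = 0" "f 6 e6 = 1" "f 7 e6 = 0" using e6 by (simp_all add: F_def)
  obtain e7 where e7: "F e7 = (0,0,0,0,0,0,1)" using surjF by (metis surj_def)
  have ev7: "f 1 e7 = 0" "f 2 e7 = 0" "f 3 e7 = 0" "f 4 e7 = 0" "f 5 e7 = 0" "f 6 e7 = 0" "f 7 e7 = 1" using e7 by (simp_all add: F_def)
  note ev = ev1 ev2 ev3 ev4 ev5 ev6 ev7
  define SS where "SS = ((f 1 X)^2 + (f 2 X)^2 + (f 3 X)^2 + (f 4 X)^2 + (f 5 X)^2 + (f 6 X)^2 + (f 7 X)^2)"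
  have c1: "cube2 (contr X \<phi>) [e2,e3,e4,e5,e6,e7] = 6 * SS * f 1 X"
    apply (subst W6[of "contr X \<phi>", OF asym])
     apply simp
    apply (simp add: Let_def P4_def contr_def phi3 G2f_def T3_def ev[unfolded One_nat_def] One_nat_def power2_eq_square SS_def)
    apply (simp add: algebra_simps)
    done
  have z1: "SS * f 1 X = 0" using c1 z unfolding zero_form_def by simp
  have c2: "cube2 (contr X \<phi>) [e1,e3,e4,e5,e6,e7] = - 6 * SS * f 2 X"
    apply (subst W6[of "contr X \<phi>", OF asym])
     apply simp
    apply (simp add: Let_def P4_def contr_def phi3 G2f_def T3_def ev[unfolded One_nat_def] One_nat_def power2_eq_square SS_def)
    apply (simp add: algebra_simps)
    done
  have z2: "SS * f 2 X = 0" using c2 z unfolding zero_form_def by simp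
  have c3: "cube2 (contr X \<phi>) [e1,e2,e4,e5,e6,e7] = 6 * SS * f 3 X"
    apply (subst W6[of "contr X \<phi>", OF asym])
     apply simp
    apply (simp add: Let_def P4_def contr_def phi3 G2f_def T3_def ev[unfolded One_nat_def] One_nat_def power2_eq_square SS_def)
    apply (simp add: algebra_simps)
    done
  have z3: "SS * f 3 X = 0" using c3 z unfolding zero_form_def by simp
  have c4: "cube2 (contr X \<phi>) [e1,e2,e3,e5,e6,e7] = - 6 * SS * f 4 X"
    apply (subst W6[of "contr X \<phi>", OF asym])
     apply simp
    apply (simp add: Let_def P4_def contr_def phi3 G2f_def T3_def ev[unfolded One_nat_def] One_nat_def power2_eq_square SS_def)
    apply (simp add: algebra_simps)
    done
  have z4: "SS * f 4 X = 0" using c4 z unfolding zero_form_def by simp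
  have c5: "cube2 (contr X \<phi>) [e1,e2,e3,e4,e6,e7] = 6 * SS * f 5 X"
    apply (subst W6[of "contr X \<phi>", OF asym])
     apply simp
    apply (simp add: Let_def P4_def contr_def phi3 G2f_def T3_def ev[unfolded One_nat_def] One_nat_def power2_eq_square SS_def)
    apply (simp add: algebra_simps)
    done
  have z5: "SS * f 5 X = 0" using c5 z unfolding zero_form_def by simp
  have c6: "cube2 (contr X \<phi>) [e1,e2,e3,e4,e5,e7] = - 6 * SS * f 6 X"
    apply (subst W6[of "contr X \<phi>", OF asym])
     apply simp
    apply (simp add: Let_def P4_def contr_def phi3 G2f_def T3_def ev[unfolded One_nat_def] One_nat_def power2_eq_square SS_def)
    apply (simp add: algebra_simps)
    done
  have z6: "SS * f 6 X = 0" using c6 z unfolding zero_form_def by simp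
  have c7: "cube2 (contr X \<phi>) [e1,e2,e3,e4,e5,e6] = 6 * SS * f 7 X"
    apply (subst W6[of "contr X \<phi>", OF asym])
     apply simp
    apply (simp add: Let_def P4_def contr_def phi3 G2f_def T3_def ev[unfolded One_nat_def] One_nat_def power2_eq_square SS_def)
    apply (simp add: algebra_simps)
    done
  have z7: "SS * f 7 X = 0" using c7 z unfolding zero_form_def by simp
  have sq: "\<And>i. 0 \<le> (f i X)^2" by simp
  have pos: "SS > 0" using nz
  proof (elim disjE)
    assume h: "f 1 X \<noteq> 0"
    then have "0 < (f 1 X)^2" by simp
    then show ?thesis using sq[of 1] sq[of 2] sq[of 3] sq[of 4] sq[of 5] sq[of 6] sq[of 7] unfolding SS_def by linarith
  next
    assume h: "f 2 X \<noteq> 0"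
    then have "0 < (f 2 X)^2" by simp
    then show ?thesis using sq[of 1] sq[of 2] sq[of 3] sq[of 4] sq[of 5] sq[of 6] sq[of 7] unfolding SS_def by linarith
  next
    assume h: "f 3 X \<noteq> 0"
    then have "0 < (f 3 X)^2" by simp
    then show ?thesis using sq[of 1] sq[of 2] sq[of 3] sq[of 4] sq[of 5] sq[of 6] sq[of 7] unfolding SS_def by linarith
  next
    assume h: "f 4 X \<noteq> 0"
    then have "0 < (f 4 X)^2" by simp
    then show ?thesis using sq[of 1] sq[of 2] sq[of 3] sq[of 4] sq[of 5] sq[of 6] sq[of 7] unfolding SS_def by linarith
  next
    assume h: "f 5 X \<noteq> 0"
    then have "0 < (f 5 X)^2" by simp
    then show ?thesis using sq[of 1] sq[of 2] sq[of 3] sq[of 4] sq[of 5] sq[of 6] sq[of 7] unfolding SS_def by linarith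
  next
    assume h: "f 6 X \<noteq> 0"
    then have "0 < (f 6 X)^2" by simp
    then show ?thesis using sq[of 1] sq[of 2] sq[of 3] sq[of 4] sq[of 5] sq[of 6] sq[of 7] unfolding SS_def by linarith
  next
    assume h: "f 7 X \<noteq> 0"
    then have "0 < (f 7 X)^2" by simp
    then show ?thesis using sq[of 1] sq[of 2] sq[of 3] sq[of 4] sq[of 5] sq[of 6] sq[of 7] unfolding SS_def by linarith
  qed
  then have "\<forall>k\<in>{1,2,3,4,5,6,7::nat}. f k X = 0" using z1 z2 z3 z4 z5 z6 z7 by auto
  then show False using nz by auto
qed

theorem mainTheorem6:
  fixes brg :: "'g::euclidean_space \<Rightarrow> 'g \<Rightarrow> 'g"
    and brh :: "'h::euclidean_space \<Rightarrow> 'h \<Rightarrow> 'h"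
    and p :: "'g \<Rightarrow> 'h"
  assumes "DIM('g) = 7" and "DIM('h) = 6"
    and "lie_algebra brg" and "lie_algebra brh"
    and "lie_hom brg brh p" and "surj p"
    and "{x. p x = 0} \<subseteq> lie_center brg"
    and "\<not> (\<exists>\<omega>. symplectic_form brh \<omega>)"
  shows "(\<forall>X. span {X} = {x. p x = 0} \<longrightarrow>
            (\<forall>\<phi>. alt_form 3 \<phi> \<and> closed_form brg 3 \<phi> \<longrightarrow> zero_form 6 (cube2 (contr X \<phi>))))
         \<and> \<not> (\<exists>\<phi>. calibrated_G2 brg \<phi>)"
proof -
  have lin: "linear p" and hom: "\<forall>x y. p (brg x y) = brh (p x) (p y)"
    using assms(5) unfolding lie_hom_def by auto
  have P1: "\<forall>X. span {X} = {x. p x = 0} \<longrightarrow>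
            (\<forall>\<phi>. alt_form 3 \<phi> \<and> closed_form brg 3 \<phi> \<longrightarrow> zero_form 6 (cube2 (contr X \<phi>)))"
  proof (intro allI impI)
    fix X and \<phi> :: "'g list \<Rightarrow> real"
    assume sX: "span {X} = {x. p x = 0}" and h: "alt_form 3 \<phi> \<and> closed_form brg 3 \<phi>"
    have "X \<in> {x. p x = 0}" using sX span_base[of X "{X}"] by simp
    then have cen: "\<forall>y. brg X y = 0" using assms(7) unfolding lie_center_def by blast
    show "zero_form 6 (cube2 (contr X \<phi>))"
      using part1[OF lin assms(6) hom cen sX assms(8)] h by blast
  qed
  moreover have "\<not> (\<exists>\<phi>. calibrated_G2 brg \<phi>)"
  proof
    assume "\<exists>\<phi>. calibrated_G2 brg \<phi>"
    then obtain \<phi> where G2: "G2_structure \<phi>" and cl: "closed_form brg 3 \<phi>"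
      unfolding calibrated_G2_def by blast
    obtain f where db: "dual_basis7 f" and eq: "\<forall>xs. length xs = 3 \<longrightarrow> \<phi> xs =
        tri f 1 2 7 xs + tri f 3 4 7 xs + tri f 5 6 7 xs + tri f 1 3 5 xs
        - tri f 2 3 6 xs - tri f 1 4 6 xs - tri f 2 4 5 xs"
      using G2 unfolding G2_structure_def by blast
    have lf: "\<And>i. i \<in> {1..7} \<Longrightarrow> linear (f i)" using db unfolding dual_basis7_def by blast
    have alt: "alt_form 3 \<phi>" by (rule G2_alt[OF lf eq])
    obtain X where X: "X \<noteq> 0" "span {X} = {x. p x = 0}"
      using ker_line[OF lin assms(6,1,2)] by blast
    have "zero_form 6 (cube2 (contr X \<phi>))" using P1 X(2) alt cl by blast
    then show False using G2_nondeg[OF G2 assms(1) X(1)] by blast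
  qed
  ultimately show ?thesis by blast
qed

end
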